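(* Every Augé–Tapia operator of finite type is recurrent but not quasi-rigid.
   Context: Let $X$ be a separable infinite-dimensional complex Banach space and $T$ a bounded linear operator on $X$. Put $A_T=\{x\in X:\lim_n\|T^nx\|=\infty\}$. A vector $x$ is recurrent if $T^{\omega_n}x\to x$ for some strictly increasing sequence $(\omega_n)$ of positive integers; $\mathrm{Rec}(T)$ is the set of recurrent vectors and $T$ is recurrent if $\mathrm{Rec}(T)$ is dense. $\mathfrak{C}$ is the set of strictly increasing sequences $\omega=(\omega_n)$ of positive integers such that $T^{\omega_n}x\to x$ for some $x\neq0$, and $\mathfrak{L}(\omega)=\{x:T^{\omega_n}x\to x\}$. $T$ is quasi-rigid if $\mathfrak{L}(\omega)$ is dense for some $\omega\in\mathfrak{C}$. A subset $F$ of a Banach space $V$ is asymptotically separated if there is a sequence $(g_n)$ of continuous linear functionals with $\liminf_n|g_n(x)|=0$ for all $x\in F$ and $\lim_n|g_n(x)|=+\infty$ for all $x\notin F$. $T$ is an Augé–Tapia operator of finite type $n$ if there exist an $n$-dimensional subspace $V\subset X$, a bounded linear projection $\mathbb{P}$ of $X$ onto $V$, and an asymptotically separated set $F\subset V$ with both $F$ and $V\setminus F$ dense in $V$, such that $A_T=\mathbb{P}^{-1}(V\setminus F)$ and $\mathrm{Rec}(T)=\mathbb{P}^{-1}(F)$. *)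

theory Defs
  imports "HOL-Analysis.Analysis"
begin

section \<open>Complex Banach spaces (HOL has only real vector spaces)\<close>

class complex_vector_space = real_vector +
  fixes scaleC :: "complex \<Rightarrow> 'a \<Rightarrow> 'a"
  assumes scaleC_of_real: "scaleC (complex_of_real r) x = scaleR r x"
    and scaleC_add_right: "scaleC a (x + y) = scaleC a x + scaleC a y"
    and scaleC_add_left: "scaleC (a + b) x = scaleC a x + scaleC b x"
    and scaleC_scaleC: "scaleC a (scaleC b x) = scaleC (a * b) x"
    and scaleC_one: "scaleC 1 x = x"

class complex_normed_space = complex_vector_space + real_normed_vector +
  assumes norm_scaleC: "norm (scaleC a x) = cmod a * norm x"

class complex_banach_space = complex_normed_space + banach

definition bounded_clinear_op :: "('a::complex_normed_space \<Rightarrow> 'b::complex_normed_space) \<Rightarrow> bool" where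
  "bounded_clinear_op f \<longleftrightarrow> bounded_linear f \<and> (\<forall>c x. f (scaleC c x) = scaleC c (f x))"

definition has_cdim :: "'a::complex_vector_space set \<Rightarrow> nat \<Rightarrow> bool" where
  "has_cdim V n \<longleftrightarrow> (\<exists>b :: nat \<Rightarrow> 'a.
      V = {(\<Sum>i<n. scaleC (c i) (b i)) | c. True} \<and>
      (\<forall>c. (\<Sum>i<n. scaleC (c i) (b i)) = 0 \<longrightarrow> (\<forall>i<n. c i = 0)))"

definition separable_type :: "'a::topological_space itself \<Rightarrow> bool" where
  "separable_type _ \<longleftrightarrow> (\<exists>D :: 'a set. countable D \<and> closure D = UNIV)"

definition infinite_cdim :: "'a::complex_vector_space itself \<Rightarrow> bool" where
  "infinite_cdim _ \<longleftrightarrow> \<not> (\<exists>n. has_cdim (UNIV :: 'a set) n)"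

definition A_T :: "('a::real_normed_vector \<Rightarrow> 'a) \<Rightarrow> 'a set" where
  "A_T T = {x. filterlim (\<lambda>n. norm ((T ^^ n) x)) at_top sequentially}"

definition Rec :: "('a::real_normed_vector \<Rightarrow> 'a) \<Rightarrow> 'a set" where
  "Rec T = {x. \<exists>\<omega> :: nat \<Rightarrow> nat. strict_mono \<omega> \<and> (\<forall>n. 0 < \<omega> n) \<and>
                 (\<lambda>n. (T ^^ \<omega> n) x) \<longlonglongrightarrow> x}"

definition recurrent :: "('a::real_normed_vector \<Rightarrow> 'a) \<Rightarrow> bool" where
  "recurrent T \<longleftrightarrow> closure (Rec T) = UNIV"

definition LL :: "('a::real_normed_vector \<Rightarrow> 'a) \<Rightarrow> (nat \<Rightarrow> nat) \<Rightarrow> 'a set" where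
  "LL T \<omega> = {x. (\<lambda>n. (T ^^ \<omega> n) x) \<longlonglongrightarrow> x}"

definition CC :: "('a::real_normed_vector \<Rightarrow> 'a) \<Rightarrow> (nat \<Rightarrow> nat) set" where
  "CC T = {\<omega>. strict_mono \<omega> \<and> (\<forall>n. 0 < \<omega> n) \<and> (\<exists>x. x \<noteq> 0 \<and> x \<in> LL T \<omega>)}"

definition quasi_rigid :: "('a::real_normed_vector \<Rightarrow> 'a) \<Rightarrow> bool" where
  "quasi_rigid T \<longleftrightarrow> (\<exists>\<omega>\<in>CC T. closure (LL T \<omega>) = UNIV)"

text \<open>Continuous complex-linear functional on the subspace V (values off V are irrelevant).\<close>
definition cont_lin_functional_on :: "'a::complex_normed_space set \<Rightarrow> ('a \<Rightarrow> complex) \<Rightarrow> bool" where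
  "cont_lin_functional_on V g \<longleftrightarrow>
     (\<forall>x\<in>V. \<forall>y\<in>V. g (x + y) = g x + g y) \<and>
     (\<forall>c. \<forall>x\<in>V. g (scaleC c x) = c * g x) \<and> continuous_on V g"

definition asymp_separated :: "'a::complex_normed_space set \<Rightarrow> 'a set \<Rightarrow> bool" where
  "asymp_separated V F \<longleftrightarrow> (\<exists>g :: nat \<Rightarrow> 'a \<Rightarrow> complex.
     (\<forall>n. cont_lin_functional_on V (g n)) \<and>
     (\<forall>x\<in>F. liminf (\<lambda>n. ereal (cmod (g n x))) = 0) \<and>
     (\<forall>x\<in>V - F. filterlim (\<lambda>n. cmod (g n x)) at_top sequentially))"

definition bounded_projection_onto :: "('a::complex_normed_space \<Rightarrow> 'a) \<Rightarrow> 'a set \<Rightarrow> bool" where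
  "bounded_projection_onto P V \<longleftrightarrow> bounded_clinear_op P \<and> range P = V \<and> (\<forall>v\<in>V. P v = v)"

definition auge_tapia_finite_type :: "('a::complex_normed_space \<Rightarrow> 'a) \<Rightarrow> nat \<Rightarrow> bool" where
  "auge_tapia_finite_type T n \<longleftrightarrow> (\<exists>V P F.
     has_cdim V n \<and> bounded_projection_onto P V \<and> F \<subseteq> V \<and>
     asymp_separated V F \<and> V \<subseteq> closure F \<and> V \<subseteq> closure (V - F) \<and>
     A_T T = P -` (V - F) \<and> Rec T = P -` F)"

end

theory Submission
  imports Defs
begin

lemma closed_span_finite:
  fixes S :: "'a::real_normed_vector set"
  assumes "finite S"
  shows "closed (span S)"
  using assms
proof (induction S rule: finite_induct)
  case empty
  then show ?case by simp
next
  case (insert v S)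
  define M where "M = span S"
  have cM: "closed M" using insert M_def by simp
  show ?case
  proof (cases "v \<in> M")
    case True
    then show ?thesis using cM M_def span_redundant by metis
  next
    case False
    have "0 \<in> M" unfolding M_def by (simp add: span_zero)
    then have "M \<noteq> {}" by auto
    define d where "d = infdist v M"
    have dpos: "d > 0" unfolding d_def using infdist_pos_not_in_closed cM False \<open>M \<noteq> {}\<close> by blast
    have key: "\<bar>t\<bar> * d \<le> norm (m + t *\<^sub>R v)" if "m \<in> M" for m t
    proof (cases "t = 0")
      case True then show ?thesis by simp
    next
      case False
      have mm: "- (1/t) *\<^sub>R m \<in> M" unfolding M_def using that M_def span_scale by blast
      have "d \<le> dist v (- (1/t) *\<^sub>R m)" unfolding d_def by (rule infdist_le[OF mm])
      also have "\<dots> = norm (v + (1/t) *\<^sub>R m)" by (simp add: dist_norm)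
      finally have "\<bar>t\<bar> * d \<le> \<bar>t\<bar> * norm (v + (1/t) *\<^sub>R m)" by (simp add: mult_left_mono)
      also have "\<dots> = norm (t *\<^sub>R (v + (1/t) *\<^sub>R m))" by simp
      also have "t *\<^sub>R (v + (1/t) *\<^sub>R m) = m + t *\<^sub>R v" using False by (simp add: algebra_simps)
      finally show ?thesis .
    qed
    have eq: "span (insert v S) = {x. \<exists>k. x - k *\<^sub>R v \<in> M}"
      unfolding M_def by (rule span_insert)
    show ?thesis unfolding eq closed_sequential_limits
    proof (intro allI impI, elim conjE)
      fix x l
      assume xin: "\<forall>n. x n \<in> {x. \<exists>k. x - k *\<^sub>R v \<in> M}" and lim: "x \<longlonglongrightarrow> l"
      have "\<forall>n. \<exists>k. x n - k *\<^sub>R v \<in> M" using xin by simp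
      then obtain t where t0: "\<forall>n. x n - t n *\<^sub>R v \<in> M" by (rule choice[THEN exE])
      then have t: "\<And>n. x n - t n *\<^sub>R v \<in> M" by blast
      have bnd: "\<bar>t i - t j\<bar> * d \<le> dist (x i) (x j)" for i j
      proof -
        have "(x i - t i *\<^sub>R v) - (x j - t j *\<^sub>R v) \<in> M"
          using t unfolding M_def by (simp add: span_diff)
        from key[OF this, of "t i - t j"]
        show ?thesis by (simp add: dist_norm algebra_simps)
      qed
      have "Cauchy x" using lim by (rule LIMSEQ_imp_Cauchy)
      have "Cauchy t"
      proof (unfold Cauchy_def, intro allI impI)
        fix e :: real assume "e > 0"
        then have "e * d > 0" using dpos by simp
        with \<open>Cauchy x\<close> obtain N where N: "\<And>m n. m \<ge> N \<Longrightarrow> n \<ge> N \<Longrightarrow> dist (x m) (x n) < e * d"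
          unfolding Cauchy_def by blast
        show "\<exists>N. \<forall>m\<ge>N. \<forall>n\<ge>N. dist (t m) (t n) < e"
        proof (intro exI allI impI)
          fix m n assume "m \<ge> N" "n \<ge> N"
          then have "\<bar>t m - t n\<bar> * d < e * d" using bnd[of m n] N[of m n] by linarith
          then show "dist (t m) (t n) < e" using dpos by (simp add: dist_real_def)
        qed
      qed
      then obtain \<tau> where tau: "t \<longlonglongrightarrow> \<tau>" using Cauchy_convergent_iff convergent_def by blast
      have "(\<lambda>n. x n - t n *\<^sub>R v) \<longlonglongrightarrow> l - \<tau> *\<^sub>R v"
        by (intro tendsto_intros lim tau)
      then have "l - \<tau> *\<^sub>R v \<in> M" by (rule closed_sequentially[OF cM t])
      then show "l \<in> {x. \<exists>k. x - k *\<^sub>R v \<in> M}" by blast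
    qed
  qed
qed

lemma closed_fin_subspace:
  fixes W :: "'a::real_normed_vector set"
  assumes "subspace W" "finite B" "W \<subseteq> span B"
  shows "closed W"
proof -
  obtain C where C: "C \<subseteq> W" "independent C" "W \<subseteq> span C"
    using basis_exists by blast
  have "finite C" using independent_span_bound[OF assms(2) C(2)] C(1) assms(3) by blast
  have "W = span C" using C assms(1) span_minimal by blast
  then show ?thesis using closed_span_finite[OF \<open>finite C\<close>] by simp
qed

lemma bl_funpow:
  fixes T :: "'a::real_normed_vector \<Rightarrow> 'a"
  assumes "bounded_linear T"
  shows "bounded_linear (T ^^ k)"
proof (induction k)
  case 0
  have "T ^^ 0 = (\<lambda>x. x)" by (simp add: fun_eq_iff)
  then show ?case using bounded_linear_ident by metis
next
  case (Suc k)
  have "T ^^ Suc k = (\<lambda>x. T ((T ^^ k) x))" by (simp add: fun_eq_iff)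
  then show ?case using bounded_linear_compose[OF assms Suc] by simp
qed

lemma scaleC_decomp:
  fixes x :: "'a::complex_vector_space"
  shows "scaleC c x = Re c *\<^sub>R x + Im c *\<^sub>R scaleC \<i> x"
proof -
  have "c = complex_of_real (Re c) + complex_of_real (Im c) * \<i>"
    using complex_eq[of c] by (simp add: mult.commute)
  then have "scaleC c x = scaleC (complex_of_real (Re c)) x + scaleC (complex_of_real (Im c) * \<i>) x"
    by (metis scaleC_add_left)
  also have "\<dots> = Re c *\<^sub>R x + Im c *\<^sub>R scaleC \<i> x"
    by (simp add: scaleC_of_real flip: scaleC_scaleC)
  finally show ?thesis .
qed

lemma cdim_span:
  fixes V :: "'a::complex_normed_space set"
  assumes "has_cdim V n"
  shows "\<exists>B. finite B \<and> V \<subseteq> span B \<and> V \<noteq> {}"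
proof -
  obtain b :: "nat \<Rightarrow> 'a" where V: "V = {(\<Sum>i<n. scaleC (c i) (b i)) | c. True}"
    using assms unfolding has_cdim_def by blast
  define B where "B = b ` {..<n} \<union> (\<lambda>i. scaleC \<i> (b i)) ` {..<n}"
  have "finite B" unfolding B_def by simp
  moreover have "V \<subseteq> span B"
  proof
    fix v assume "v \<in> V"
    then obtain c where v: "v = (\<Sum>i<n. scaleC (c i) (b i))" using V by blast
    have "scaleC (c i) (b i) \<in> span B" if "i \<in> {..<n}" for i
    proof -
      have "b i \<in> span B" "scaleC \<i> (b i) \<in> span B"
        using that unfolding B_def by (auto intro: span_base)
      then show ?thesis by (subst scaleC_decomp) (intro span_add span_scale)
    qed
    then show "v \<in> span B" unfolding v by (rule span_sum)
  qed
  moreover have "V \<noteq> {}" using V by blast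
  ultimately show ?thesis by blast
qed

theorem theorem3p6:
  fixes T :: "'a::complex_banach_space \<Rightarrow> 'a" and n :: nat
  assumes "separable_type TYPE('a)"
    and "infinite_cdim TYPE('a)"
    and "bounded_clinear_op T"
    and "auge_tapia_finite_type T n"
  shows "recurrent T \<and> \<not> quasi_rigid T"
proof -
  obtain V P F where cd: "has_cdim V n" and bp: "bounded_projection_onto P V" and FV: "F \<subseteq> V"
    and dF: "V \<subseteq> closure F" and dVF: "V \<subseteq> closure (V - F)"
    and RT: "Rec T = P -` F"
    using assms(4) unfolding auge_tapia_finite_type_def by blast
  have blP: "bounded_linear P" and rP: "range P = V" and PV: "\<And>v. v \<in> V \<Longrightarrow> P v = v"
    using bp unfolding bounded_projection_onto_def bounded_clinear_op_def by auto
  interpret P: bounded_linear P by (rule blP)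
  have blT: "bounded_linear T" using assms(3) unfolding bounded_clinear_op_def by simp
  have rec: "recurrent T"
    unfolding recurrent_def
  proof -
    have "x \<in> closure (Rec T)" for x
    proof (unfold closure_approachable, intro allI impI)
      fix e :: real assume "e > 0"
      have "P x \<in> V" using rP by blast
      then have "P x \<in> closure F" using dF by blast
      then obtain f where f: "f \<in> F" "dist f (P x) < e" using \<open>e > 0\<close> closure_approachable by metis
      define y where "y = x - P x + f"
      have "P y = P x - P (P x) + P f" unfolding y_def by (simp add: P.add P.diff)
      also have "\<dots> = f" using PV \<open>P x \<in> V\<close> f(1) FV by auto
      finally have "y \<in> Rec T" using RT f(1) by simp
      moreover have "dist y x = dist f (P x)" unfolding y_def by (simp add: dist_norm algebra_simps)
      ultimately show "\<exists>y\<in>Rec T. dist y x < e" using f(2) by metis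
    qed
    then show "closure (Rec T) = UNIV" by auto
  qed
  have nqr: "\<not> quasi_rigid T"
  proof
    assume "quasi_rigid T"
    then obtain \<omega> where om: "\<omega> \<in> CC T" and dens: "closure (LL T \<omega>) = UNIV"
      unfolding quasi_rigid_def by blast
    have sm: "strict_mono \<omega>" and pos: "\<forall>n. 0 < \<omega> n" using om unfolding CC_def by auto
    define L where "L = LL T \<omega>"
    have blk: "\<And>k. bounded_linear (T ^^ k)" using bl_funpow[OF blT] by blast
    have l0: "(T ^^ k) 0 = 0" for k
    proof - interpret bounded_linear "T ^^ k" by (rule blk) show ?thesis by (rule zero) qed
    have ladd: "(T ^^ k) (x + y) = (T ^^ k) x + (T ^^ k) y" for k x y
    proof - interpret bounded_linear "T ^^ k" by (rule blk) show ?thesis by (rule add) qed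
    have lsc: "(T ^^ k) (c *\<^sub>R x) = c *\<^sub>R (T ^^ k) x" for k c x
    proof - interpret bounded_linear "T ^^ k" by (rule blk) show ?thesis by (rule scaleR) qed
    have LR: "L \<subseteq> Rec T" unfolding L_def LL_def Rec_def using sm pos by blast
    define W where "W = P ` L"
    have WF: "W \<subseteq> F" unfolding W_def using LR RT by auto
    have WV: "W \<subseteq> V" using WF FV by auto
    have subL: "subspace L"
      unfolding subspace_def
    proof (intro conjI ballI allI)
      show "0 \<in> L" unfolding L_def LL_def by (simp add: l0)
    next
      fix x y assume "x \<in> L" "y \<in> L"
      then have "(\<lambda>k. (T ^^ \<omega> k) x + (T ^^ \<omega> k) y) \<longlonglongrightarrow> x + y"
        unfolding L_def LL_def by (auto intro: tendsto_add)
      then show "x + y \<in> L" unfolding L_def LL_def by (simp add: ladd)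
    next
      fix c :: real and x assume "x \<in> L"
      then have "(\<lambda>k. c *\<^sub>R (T ^^ \<omega> k) x) \<longlonglongrightarrow> c *\<^sub>R x"
        unfolding L_def LL_def by (auto intro: tendsto_scaleR)
      then show "c *\<^sub>R x \<in> L" unfolding L_def LL_def by (simp add: lsc)
    qed
    have subW: "subspace W"
      unfolding subspace_def
    proof (intro conjI ballI allI)
      show "0 \<in> W" unfolding W_def using subL subspace_0 P.zero by (metis image_eqI)
    next
      fix x y assume "x \<in> W" "y \<in> W"
      then obtain a b where "a \<in> L" "b \<in> L" "x = P a" "y = P b" unfolding W_def by blast
      then show "x + y \<in> W" unfolding W_def using subL subspace_add P.add by (metis image_eqI)
    next
      fix c :: real and x assume "x \<in> W"
      then obtain a where "a \<in> L" "x = P a" unfolding W_def by blast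
      then show "c *\<^sub>R x \<in> W" unfolding W_def using subL subspace_scale P.scaleR by (metis image_eqI)
    qed
    obtain B where B: "finite B" "V \<subseteq> span B" "V \<noteq> {}" using cdim_span[OF cd] by blast
    have cW: "closed W" using closed_fin_subspace[OF subW B(1)] WV B(2) by blast
    have "V \<subseteq> closure W"
    proof
      fix v assume "v \<in> V"
      then have "v = P v" using PV by simp
      moreover have "P v \<in> P ` closure L" using dens unfolding L_def by simp
      ultimately show "v \<in> closure W"
        unfolding W_def using closure_bounded_linear_image_subset[OF blP, of L] by auto
    qed
    then have "V \<subseteq> F" using cW WF by (simp add: closure_closed)
    then have "V - F = {}" by blast
    then have "V \<subseteq> {}" using dVF by (metis closure_empty)
    then show False using B(3) by blast
  qed
  show ?thesis using rec nqr by blast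
qed

end
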